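(* Let $(\mathfrak g,[\cdot,\cdot],\alpha,\varepsilon)$ be a color Hom-Lie algebra and $\theta$ an even element of the centroid of $\mathfrak g$. Define even brackets $[x,y]_1^\theta=[\theta(x),y]$ and $[x,y]_2^\theta=[\theta(x),\theta(y)]$. Then each of the following is a color Hom-Lie algebra: (i) $(\mathfrak g,[\cdot,\cdot],\theta\circ\alpha,\varepsilon)$, $(\mathfrak g,[\cdot,\cdot]_1^\theta,\theta\circ\alpha,\varepsilon)$, $(\mathfrak g,[\cdot,\cdot]_2^\theta,\theta\circ\alpha,\varepsilon)$; (ii) $(\mathfrak g,[\cdot,\cdot],\alpha\circ\theta,\varepsilon)$, $(\mathfrak g,[\cdot,\cdot]_1^\theta,\alpha\circ\theta,\varepsilon)$, $(\mathfrak g,[\cdot,\cdot]_2^\theta,\alpha\circ\theta,\varepsilon)$.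
   Context: $\mathbb K$ is a field of characteristic zero and $\Gamma$ an abelian group. A bicharacter is a map $\varepsilon:\Gamma\times\Gamma\to\mathbb K\setminus\{0\}$ with $\varepsilon(a,b)\varepsilon(b,a)=1$, $\varepsilon(a,b+c)=\varepsilon(a,b)\varepsilon(a,c)$, $\varepsilon(a+b,c)=\varepsilon(a,c)\varepsilon(b,c)$; for homogeneous $x,y$, $\varepsilon(x,y)$ means $\varepsilon(\deg x,\deg y)$. Even maps preserve degree. A color Hom-Lie algebra $(\mathfrak g,[\cdot,\cdot],\alpha,\varepsilon)$ is a $\Gamma$-graded vector space with even bilinear bracket and even linear $\alpha$ such that, for homogeneous $x,y,z$, $[x,y]=-\varepsilon(x,y)[y,x]$ and $\varepsilon(z,x)[\alpha(x),[y,z]]+\varepsilon(x,y)[\alpha(y),[z,x]]+\varepsilon(y,z)[\alpha(z),[x,y]]=0$. The centroid of $\mathfrak g$ is the set of homogeneous linear maps $\theta:\mathfrak g\to\mathfrak g$ (and their sums) with $\theta([x,y])=[\theta(x),y]=\varepsilon(\theta,x)[x,\theta(y)]$ for all homogeneous $x,y$; for even $\theta$ this reads $\theta([x,y])=[\theta(x),y]=[x,\theta(y)]$. *)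

theory Defs
  imports Complex_Main
begin

text \<open>A vector space over a field 'k (characteristic zero imposed by the type class
  in the theorem) is given by a scalar multiplication scale :: 'k => 'v => 'v.\<close>

definition graded_space :: "('k::field \<Rightarrow> 'v::ab_group_add \<Rightarrow> 'v) \<Rightarrow> ('g \<Rightarrow> 'v set) \<Rightarrow> bool" where
  "graded_space scale gr \<longleftrightarrow>
     Vector_Spaces.vector_space scale \<and>
     (\<forall>a. 0 \<in> gr a \<and> (\<forall>x\<in>gr a. \<forall>y\<in>gr a. x + y \<in> gr a)
            \<and> (\<forall>k. \<forall>x\<in>gr a. scale k x \<in> gr a)) \<and>
     (\<forall>v. \<exists>!c :: 'g \<Rightarrow> 'v. finite {a. c a \<noteq> 0} \<and> (\<forall>a. c a \<in> gr a)
                         \<and> v = sum c {a. c a \<noteq> 0})"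

definition bicharacter :: "('g::ab_group_add \<Rightarrow> 'g \<Rightarrow> 'k::field) \<Rightarrow> bool" where
  "bicharacter \<epsilon> \<longleftrightarrow>
     (\<forall>a b. \<epsilon> a b \<noteq> 0) \<and>
     (\<forall>a b. \<epsilon> a b * \<epsilon> b a = 1) \<and>
     (\<forall>a b c. \<epsilon> a (b + c) = \<epsilon> a b * \<epsilon> a c) \<and>
     (\<forall>a b c. \<epsilon> (a + b) c = \<epsilon> a c * \<epsilon> b c)"

definition even_map :: "('g \<Rightarrow> 'v set) \<Rightarrow> ('v \<Rightarrow> 'v) \<Rightarrow> bool" where
  "even_map gr f \<longleftrightarrow> (\<forall>a. \<forall>x\<in>gr a. f x \<in> gr a)"

definition even_bracket :: "('g::ab_group_add \<Rightarrow> 'v set) \<Rightarrow> ('v \<Rightarrow> 'v \<Rightarrow> 'v) \<Rightarrow> bool" where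
  "even_bracket gr br \<longleftrightarrow> (\<forall>a b. \<forall>x\<in>gr a. \<forall>y\<in>gr b. br x y \<in> gr (a + b))"

definition bilinear_map :: "('k::field \<Rightarrow> 'v::ab_group_add \<Rightarrow> 'v) \<Rightarrow> ('v \<Rightarrow> 'v \<Rightarrow> 'v) \<Rightarrow> bool" where
  "bilinear_map scale br \<longleftrightarrow>
     (\<forall>x. Vector_Spaces.linear scale scale (br x)) \<and>
     (\<forall>y. Vector_Spaces.linear scale scale (\<lambda>x. br x y))"

definition color_hom_lie ::
  "('k::field \<Rightarrow> 'v::ab_group_add \<Rightarrow> 'v) \<Rightarrow> ('g::ab_group_add \<Rightarrow> 'v set)
     \<Rightarrow> ('v \<Rightarrow> 'v \<Rightarrow> 'v) \<Rightarrow> ('v \<Rightarrow> 'v) \<Rightarrow> ('g \<Rightarrow> 'g \<Rightarrow> 'k) \<Rightarrow> bool" where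
  "color_hom_lie scale gr br \<alpha> \<epsilon> \<longleftrightarrow>
     graded_space scale gr \<and> bicharacter \<epsilon> \<and>
     bilinear_map scale br \<and> even_bracket gr br \<and>
     Vector_Spaces.linear scale scale \<alpha> \<and> even_map gr \<alpha> \<and>
     (\<forall>a b. \<forall>x\<in>gr a. \<forall>y\<in>gr b. br x y = - scale (\<epsilon> a b) (br y x)) \<and>
     (\<forall>a b c. \<forall>x\<in>gr a. \<forall>y\<in>gr b. \<forall>z\<in>gr c.
        scale (\<epsilon> c a) (br (\<alpha> x) (br y z)) + scale (\<epsilon> a b) (br (\<alpha> y) (br z x))
          + scale (\<epsilon> b c) (br (\<alpha> z) (br x y)) = 0)"

text \<open>Even (degree-zero homogeneous) elements of the centroid: for even theta the
  colour factor epsilon(theta,x) equals 1.\<close>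
definition even_centroid ::
  "('k::field \<Rightarrow> 'v::ab_group_add \<Rightarrow> 'v) \<Rightarrow> ('g \<Rightarrow> 'v set) \<Rightarrow> ('v \<Rightarrow> 'v \<Rightarrow> 'v) \<Rightarrow> ('v \<Rightarrow> 'v) \<Rightarrow> bool" where
  "even_centroid scale gr br \<theta> \<longleftrightarrow>
     Vector_Spaces.linear scale scale \<theta> \<and> even_map gr \<theta> \<and>
     (\<forall>a b. \<forall>x\<in>gr a. \<forall>y\<in>gr b.
        \<theta> (br x y) = br (\<theta> x) y \<and> br (\<theta> x) y = br x (\<theta> y))"

end

theory Submission
  imports Defs
begin

lemma lin_iff:
  "Vector_Spaces.linear s s f \<longleftrightarrow> Vector_Spaces.vector_space s \<and>
     (\<forall>x y. f (x + y) = f x + f y) \<and> (\<forall>c x. f (s c x) = s c (f x))"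
  unfolding module_hom_iff_linear[symmetric] module_hom_iff module_iff_vector_space by auto

lemma lin_comp:
  "Vector_Spaces.linear s s f \<Longrightarrow> Vector_Spaces.linear s s g \<Longrightarrow> Vector_Spaces.linear s s (\<lambda>x. g (f x))"
  unfolding lin_iff by auto

lemma lin_zero: "Vector_Spaces.linear s s f \<Longrightarrow> f 0 = 0"
  unfolding lin_iff by (metis add_cancel_right_right)

lemma jac_transfer:
  assumes vs: "Vector_Spaces.vector_space scale"
    and jac: "\<forall>a b c. \<forall>x\<in>gr a. \<forall>y\<in>gr b. \<forall>z\<in>gr c.
        scale (\<epsilon> c a) (br (\<alpha> x) (br y z)) + scale (\<epsilon> a b) (br (\<alpha> y) (br z x))
          + scale (\<epsilon> b c) (br (\<alpha> z) (br x y)) = 0"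
    and lin: "Vector_Spaces.linear scale scale \<Phi>"
    and eq: "\<And>a b c x y z. x \<in> gr a \<Longrightarrow> y \<in> gr b \<Longrightarrow> z \<in> gr c \<Longrightarrow>
        br' (\<beta> x) (br' y z) = \<Phi> (br (\<alpha> x) (br y z))"
  shows "\<forall>a b c. \<forall>x\<in>gr a. \<forall>y\<in>gr b. \<forall>z\<in>gr c.
        scale (\<epsilon> c a) (br' (\<beta> x) (br' y z)) + scale (\<epsilon> a b) (br' (\<beta> y) (br' z x))
          + scale (\<epsilon> b c) (br' (\<beta> z) (br' x y)) = 0"
proof (intro allI ballI)
  fix a b c x y z assume xyz: "x \<in> gr a" "y \<in> gr b" "z \<in> gr c"
  have "scale (\<epsilon> c a) (br' (\<beta> x) (br' y z)) + scale (\<epsilon> a b) (br' (\<beta> y) (br' z x))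
          + scale (\<epsilon> b c) (br' (\<beta> z) (br' x y)) =
       \<Phi> (scale (\<epsilon> c a) (br (\<alpha> x) (br y z)) + scale (\<epsilon> a b) (br (\<alpha> y) (br z x))
          + scale (\<epsilon> b c) (br (\<alpha> z) (br x y)))"
    using lin xyz by (simp add: eq lin_iff)
  also have "\<dots> = 0" using jac xyz lin_zero[OF lin] by simp
  finally show "scale (\<epsilon> c a) (br' (\<beta> x) (br' y z)) + scale (\<epsilon> a b) (br' (\<beta> y) (br' z x))
          + scale (\<epsilon> b c) (br' (\<beta> z) (br' x y)) = 0" .
qed

theorem mainTheorem3:
  fixes scale :: "'k::field_char_0 \<Rightarrow> 'v::ab_group_add \<Rightarrow> 'v"
    and gr :: "'g::ab_group_add \<Rightarrow> 'v set"
    and br :: "'v \<Rightarrow> 'v \<Rightarrow> 'v" and \<alpha> \<theta> :: "'v \<Rightarrow> 'v"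
    and \<epsilon> :: "'g \<Rightarrow> 'g \<Rightarrow> 'k"
  assumes "color_hom_lie scale gr br \<alpha> \<epsilon>"
    and "even_centroid scale gr br \<theta>"
  shows "color_hom_lie scale gr br (\<theta> \<circ> \<alpha>) \<epsilon>
       \<and> color_hom_lie scale gr (\<lambda>x y. br (\<theta> x) y) (\<theta> \<circ> \<alpha>) \<epsilon>
       \<and> color_hom_lie scale gr (\<lambda>x y. br (\<theta> x) (\<theta> y)) (\<theta> \<circ> \<alpha>) \<epsilon>
       \<and> color_hom_lie scale gr br (\<alpha> \<circ> \<theta>) \<epsilon>
       \<and> color_hom_lie scale gr (\<lambda>x y. br (\<theta> x) y) (\<alpha> \<circ> \<theta>) \<epsilon>
       \<and> color_hom_lie scale gr (\<lambda>x y. br (\<theta> x) (\<theta> y)) (\<alpha> \<circ> \<theta>) \<epsilon>"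
proof -
  define H where "H x \<longleftrightarrow> (\<exists>a. x \<in> gr a)" for x
  note c = assms(1)[unfolded color_hom_lie_def]
  note c2 = c[THEN conjunct2] note c3 = c2[THEN conjunct2] note c4 = c3[THEN conjunct2]
  note c5 = c4[THEN conjunct2] note c6 = c5[THEN conjunct2] note c7 = c6[THEN conjunct2]
  have gs: "graded_space scale gr" by (rule c[THEN conjunct1])
  have bc: "bicharacter \<epsilon>" by (rule c2[THEN conjunct1])
  have bl: "bilinear_map scale br" by (rule c3[THEN conjunct1])
  have eb: "even_bracket gr br" by (rule c4[THEN conjunct1])
  have la: "Vector_Spaces.linear scale scale \<alpha>" by (rule c5[THEN conjunct1])
  have ea: "even_map gr \<alpha>" by (rule c6[THEN conjunct1])
  have sk: "\<forall>a b. \<forall>x\<in>gr a. \<forall>y\<in>gr b. br x y = - scale (\<epsilon> a b) (br y x)"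
    by (rule c7[THEN conjunct1])
  have jac: "\<forall>a b c. \<forall>x\<in>gr a. \<forall>y\<in>gr b. \<forall>z\<in>gr c.
        scale (\<epsilon> c a) (br (\<alpha> x) (br y z)) + scale (\<epsilon> a b) (br (\<alpha> y) (br z x))
          + scale (\<epsilon> b c) (br (\<alpha> z) (br x y)) = 0"
    by (rule c7[THEN conjunct2])
  have lt: "Vector_Spaces.linear scale scale \<theta>" and et: "even_map gr \<theta>"
    and ct: "\<And>a b x y. x \<in> gr a \<Longrightarrow> y \<in> gr b \<Longrightarrow> \<theta> (br x y) = br (\<theta> x) y"
    and ct2: "\<And>a b x y. x \<in> gr a \<Longrightarrow> y \<in> gr b \<Longrightarrow> br (\<theta> x) y = br x (\<theta> y)"
    using assms(2) unfolding even_centroid_def by auto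
  have vs: "Vector_Spaces.vector_space scale" using gs unfolding graded_space_def by auto
  have bl1: "\<And>x. Vector_Spaces.linear scale scale (br x)"
    and bl2: "\<And>y. Vector_Spaces.linear scale scale (\<lambda>x. br x y)"
    using bl unfolding bilinear_map_def by auto
  have tg: "\<And>a x. x \<in> gr a \<Longrightarrow> \<theta> x \<in> gr a" using et unfolding even_map_def by auto
  have ag: "\<And>a x. x \<in> gr a \<Longrightarrow> \<alpha> x \<in> gr a" using ea unfolding even_map_def by auto
  have bg: "\<And>a b x y. x \<in> gr a \<Longrightarrow> y \<in> gr b \<Longrightarrow> br x y \<in> gr (a+b)"
    using eb unfolding even_bracket_def by auto
  have nz: "\<And>a b. \<epsilon> a b \<noteq> 0" using bc unfolding bicharacter_def by auto
  have Ht: "H x \<Longrightarrow> H (\<theta> x)" for x using tg unfolding H_def by blast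
  have Ha: "H x \<Longrightarrow> H (\<alpha> x)" for x using ag unfolding H_def by blast
  have Hb: "H x \<Longrightarrow> H y \<Longrightarrow> H (br x y)" for x y using bg unfolding H_def by blast
  have R1: "br (\<theta> x) y = \<theta> (br x y)" if hxy: "H x" "H y" for x y
  proof -
    obtain a b where "x \<in> gr a" "y \<in> gr b" using hxy unfolding H_def by blast
    thus ?thesis using ct[of x a y b] by simp
  qed
  have R2: "br x (\<theta> y) = \<theta> (br x y)" if hxy: "H x" "H y" for x y
  proof -
    obtain a b where "x \<in> gr a" "y \<in> gr b" using hxy unfolding H_def by blast
    thus ?thesis using ct[of x a y b] ct2[of x a y b] by simp
  qed
  have tlin: "\<theta> (u + v) = \<theta> u + \<theta> v" "\<theta> (scale k u) = scale k (\<theta> u)" for u v k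
    using lt unfolding lin_iff by auto
  have R3: "br (\<alpha> (\<theta> x)) (br y z) = \<theta> (br (\<alpha> x) (br y z))"
    if xyz: "x \<in> gr a" "y \<in> gr b" "z \<in> gr c" for a b c x y z
  proof -
    have Hx: "H x" "H y" "H z" using xyz unfolding H_def by auto
    have j1: "scale (\<epsilon> c a) (br (\<alpha> (\<theta> x)) (br y z)) + scale (\<epsilon> a b) (br (\<alpha> y) (br z (\<theta> x)))
          + scale (\<epsilon> b c) (br (\<alpha> z) (br (\<theta> x) y)) = 0"
      using jac tg[OF xyz(1)] xyz(2,3) by blast
    have j2: "\<theta> (scale (\<epsilon> c a) (br (\<alpha> x) (br y z)) + scale (\<epsilon> a b) (br (\<alpha> y) (br z x))
          + scale (\<epsilon> b c) (br (\<alpha> z) (br x y))) = 0"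
      using jac xyz lin_zero[OF lt] by simp
    from j1 j2 have "scale (\<epsilon> c a) (br (\<alpha> (\<theta> x)) (br y z)) = scale (\<epsilon> c a) (\<theta> (br (\<alpha> x) (br y z)))"
      using Hx apply (simp add: R1 R2 Ha Hb tlin)
      by (simp only: add.assoc add_eq_0_iff2)
    thus ?thesis using vector_space.scale_cancel_left[OF vs] nz by blast
  qed

  have Hgr: "x \<in> gr a \<Longrightarrow> H x" for x a unfolding H_def by blast
  have R3': "br (\<alpha> (\<theta> x)) (br y z) = \<theta> (br (\<alpha> x) (br y z))" if "H x" "H y" "H z" for x y z
    using that R3 unfolding H_def by blast
  have l2: "Vector_Spaces.linear scale scale (\<lambda>v. \<theta> (\<theta> v))" by (rule lin_comp[OF lt lt])
  have l3: "Vector_Spaces.linear scale scale (\<lambda>v. \<theta> (\<theta> (\<theta> v)))" by (rule lin_comp[OF l2 lt])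
  have l5: "Vector_Spaces.linear scale scale (\<lambda>v. \<theta> (\<theta> (\<theta> (\<theta> (\<theta> v)))))"
    by (rule lin_comp[OF l3 l2])
  have mk: "color_hom_lie scale gr br' \<beta> \<epsilon>"
    if "bilinear_map scale br'" "even_bracket gr br'" "Vector_Spaces.linear scale scale \<beta>"
       "even_map gr \<beta>" "\<forall>a b. \<forall>x\<in>gr a. \<forall>y\<in>gr b. br' x y = - scale (\<epsilon> a b) (br' y x)"
       "Vector_Spaces.linear scale scale \<Phi>"
       "\<And>a b c x y z. x \<in> gr a \<Longrightarrow> y \<in> gr b \<Longrightarrow> z \<in> gr c \<Longrightarrow>
          br' (\<beta> x) (br' y z) = \<Phi> (br (\<alpha> x) (br y z))"
     for br' \<beta> \<Phi>
  proof -
    have "\<forall>a b c. \<forall>x\<in>gr a. \<forall>y\<in>gr b. \<forall>z\<in>gr c.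
        scale (\<epsilon> c a) (br' (\<beta> x) (br' y z)) + scale (\<epsilon> a b) (br' (\<beta> y) (br' z x))
          + scale (\<epsilon> b c) (br' (\<beta> z) (br' x y)) = 0"
      by (rule jac_transfer[OF vs jac that(6)], rule that(7))
    thus ?thesis unfolding color_hom_lie_def using gs bc that(1-5) by blast
  qed
  have lta: "Vector_Spaces.linear scale scale (\<theta> \<circ> \<alpha>)"
    using lin_comp[OF la lt] by (simp add: comp_def)
  have lat: "Vector_Spaces.linear scale scale (\<alpha> \<circ> \<theta>)"
    using lin_comp[OF lt la] by (simp add: comp_def)
  have eta: "even_map gr (\<theta> \<circ> \<alpha>)" "even_map gr (\<alpha> \<circ> \<theta>)"
    unfolding even_map_def using tg ag by auto
  have bb1: "bilinear_map scale (\<lambda>x y. br (\<theta> x) y)"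
    unfolding bilinear_map_def using bl1 lin_comp[OF lt bl2] by blast
  have bb2: "bilinear_map scale (\<lambda>x y. br (\<theta> x) (\<theta> y))"
    unfolding bilinear_map_def using lin_comp[OF lt bl1] lin_comp[OF lt bl2] by blast
  have eb1: "even_bracket gr (\<lambda>x y. br (\<theta> x) y)"
    unfolding even_bracket_def using bg tg by blast
  have eb2: "even_bracket gr (\<lambda>x y. br (\<theta> x) (\<theta> y))"
    unfolding even_bracket_def using bg tg by blast
  have sk1: "\<forall>a b. \<forall>x\<in>gr a. \<forall>y\<in>gr b. br (\<theta> x) y = - scale (\<epsilon> a b) (br (\<theta> y) x)"
  proof (intro allI ballI)
    fix a b x y assume "x \<in> gr a" "y \<in> gr b"
    thus "br (\<theta> x) y = - scale (\<epsilon> a b) (br (\<theta> y) x)"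
      using sk tg ct2 by metis
  qed
  have sk2: "\<forall>a b. \<forall>x\<in>gr a. \<forall>y\<in>gr b. br (\<theta> x) (\<theta> y) = - scale (\<epsilon> a b) (br (\<theta> y) (\<theta> x))"
    using sk tg by blast
  have c1: "color_hom_lie scale gr br (\<theta> \<circ> \<alpha>) \<epsilon>"
    by (rule mk[OF bl eb lta eta(1) sk lt]) (simp add: R1 Hgr Ha Hb)
  have c2: "color_hom_lie scale gr (\<lambda>x y. br (\<theta> x) y) (\<theta> \<circ> \<alpha>) \<epsilon>"
    by (rule mk[OF bb1 eb1 lta eta(1) sk1 l3]) (simp add: R1 R2 Hgr Ha Hb Ht)
  have c3: "color_hom_lie scale gr (\<lambda>x y. br (\<theta> x) (\<theta> y)) (\<theta> \<circ> \<alpha>) \<epsilon>"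
    by (rule mk[OF bb2 eb2 lta eta(1) sk2 l5]) (simp add: R1 R2 Hgr Ha Hb Ht)
  have c4: "color_hom_lie scale gr br (\<alpha> \<circ> \<theta>) \<epsilon>"
    by (rule mk[OF bl eb lat eta(2) sk lt]) (simp add: R3' Hgr)
  have c5: "color_hom_lie scale gr (\<lambda>x y. br (\<theta> x) y) (\<alpha> \<circ> \<theta>) \<epsilon>"
    by (rule mk[OF bb1 eb1 lat eta(2) sk1 l3]) (simp add: R1 R2 R3' Hgr Ha Hb Ht)
  have c6: "color_hom_lie scale gr (\<lambda>x y. br (\<theta> x) (\<theta> y)) (\<alpha> \<circ> \<theta>) \<epsilon>"
    by (rule mk[OF bb2 eb2 lat eta(2) sk2 l5]) (simp add: R1 R2 R3' Hgr Ha Hb Ht)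
  show ?thesis using c1 c2 c3 c4 c5 c6 by blast
qed

end
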